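(* Let $\eta,\delta\in(0,1)$ and let $G$ be a graph on $n$ vertices whose matrix $\mathbf{G}$ is positive semidefinite. Let $\mathrm{val}_{\mathbf{G}}(\delta)=\max_{\|x\|_2=1,\|x\|_0\le\delta n}x^{\intercal}\mathbf{G}x$. If some $S\subset V$ with $|S|=\delta n$ has $\Phi_G(S)\le\eta$, then $\mathrm{val}_{\mathbf{G}}(\delta)\ge 1-\eta$. If every $S\subset V$ with $|S|\le 2\delta n$ has $\Phi_G(S)\ge 1-\eta$, then $\mathrm{val}_{\mathbf{G}}(\delta)\le\sqrt{1-(1-\eta)^2}$.
   Context: A (edge-weighted, 1-regular) graph $G$ on vertex set $V$ with $|V|=n$ is given by a symmetric matrix $\mathbf{G}$ with nonnegative entries whose rows all sum to $1$. For $S\subset V$, $\Phi_G(S)=\frac{1}{|S|}\sum_{i\in S,j\notin S}\mathbf{G}_{ij}$. $\|x\|_0$ is the number of nonzero entries of $x$. *)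

theory Defs
  imports "HOL-Analysis.Analysis"
begin

text \<open>A 1-regular edge-weighted graph on the finite vertex type 'a, given by its matrix.\<close>
definition graph_matrix :: "('a::finite \<Rightarrow> 'a \<Rightarrow> real) \<Rightarrow> bool" where
  "graph_matrix G \<longleftrightarrow> (\<forall>i j. G i j = G j i) \<and> (\<forall>i j. 0 \<le> G i j) \<and> (\<forall>i. (\<Sum>j\<in>UNIV. G i j) = 1)"

definition quad_form :: "('a::finite \<Rightarrow> 'a \<Rightarrow> real) \<Rightarrow> ('a \<Rightarrow> real) \<Rightarrow> real" where
  "quad_form G x = (\<Sum>i\<in>UNIV. \<Sum>j\<in>UNIV. x i * G i j * x j)"

definition psd :: "('a::finite \<Rightarrow> 'a \<Rightarrow> real) \<Rightarrow> bool" where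
  "psd G \<longleftrightarrow> (\<forall>x. 0 \<le> quad_form G x)"

definition expansion :: "('a::finite \<Rightarrow> 'a \<Rightarrow> real) \<Rightarrow> 'a set \<Rightarrow> real" where
  "expansion G S = (1 / real (card S)) * (\<Sum>i\<in>S. \<Sum>j\<in>UNIV - S. G i j)"

definition l2norm :: "('a::finite \<Rightarrow> real) \<Rightarrow> real" where
  "l2norm x = sqrt (\<Sum>i\<in>UNIV. (x i)\<^sup>2)"

definition l0norm :: "('a::finite \<Rightarrow> real) \<Rightarrow> nat" where
  "l0norm x = card {i. x i \<noteq> 0}"

definition sparse_val :: "('a::finite \<Rightarrow> 'a \<Rightarrow> real) \<Rightarrow> real \<Rightarrow> real" where
  "sparse_val G \<delta> = Sup {quad_form G x | x. l2norm x = 1 \<and> real (l0norm x) \<le> \<delta> * real CARD('a)}"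

end

theory Submission
  imports Defs
begin

lemma rowsum:
  assumes "graph_matrix G"
  shows "(\<Sum>i\<in>UNIV. \<Sum>j\<in>UNIV. G i j * f i) = (\<Sum>i\<in>UNIV. f i)"
proof -
  have "\<And>i. (\<Sum>j\<in>UNIV. G i j * f i) = f i"
    using assms by (simp add: graph_matrix_def sum_distrib_right[symmetric])
  then show ?thesis by simp
qed

lemma colsum:
  assumes "graph_matrix G"
  shows "(\<Sum>i\<in>UNIV. \<Sum>j\<in>UNIV. G i j * f j) = (\<Sum>j\<in>UNIV. f j)"
proof -
  have "(\<Sum>i\<in>UNIV. \<Sum>j\<in>UNIV. G i j * f j) = (\<Sum>j\<in>UNIV. \<Sum>i\<in>UNIV. G j i * f j)"
    using assms by (subst sum.swap) (simp add: graph_matrix_def)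
  also have "\<dots> = (\<Sum>j\<in>UNIV. f j)" using rowsum[OF assms] .
  finally show ?thesis .
qed

lemma cs2:
  fixes G :: "'a::finite \<Rightarrow> 'a \<Rightarrow> real"
  assumes "\<And>i j. 0 \<le> G i j"
  shows "(\<Sum>i\<in>UNIV. \<Sum>j\<in>UNIV. G i j * a i j * b i j)\<^sup>2
     \<le> (\<Sum>i\<in>UNIV. \<Sum>j\<in>UNIV. G i j * (a i j)\<^sup>2) * (\<Sum>i\<in>UNIV. \<Sum>j\<in>UNIV. G i j * (b i j)\<^sup>2)"
proof -
  define A where "A = (\<Sum>i\<in>UNIV. \<Sum>j\<in>UNIV. G i j * (a i j)\<^sup>2)"
  define B where "B = (\<Sum>i\<in>UNIV. \<Sum>j\<in>UNIV. G i j * (b i j)\<^sup>2)"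
  define C where "C = (\<Sum>i\<in>UNIV. \<Sum>j\<in>UNIV. G i j * a i j * b i j)"
  have key: "0 \<le> A - 2*t*C + t\<^sup>2*B" for t
  proof -
    have "0 \<le> (\<Sum>i\<in>UNIV. \<Sum>j\<in>UNIV. G i j * (a i j - t * b i j)\<^sup>2)"
      by (intro sum_nonneg mult_nonneg_nonneg assms) auto
    also have "\<dots> = A - 2*t*C + t\<^sup>2*B"
      unfolding A_def B_def C_def
      by (simp add: power2_eq_square algebra_simps sum.distrib sum_subtractf sum_distrib_left)
    finally show ?thesis .
  qed
  have B0: "0 \<le> B" unfolding B_def by (intro sum_nonneg mult_nonneg_nonneg assms) auto
  show ?thesis
  proof (cases "B = 0")
    case True
    have "C = 0"
    proof (rule ccontr)
      assume "C \<noteq> 0"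
      have "0 \<le> A - 2*((A+1)/(2*C))*C + ((A+1)/(2*C))\<^sup>2*B" by (rule key)
      with True \<open>C \<noteq> 0\<close> show False by simp
    qed
    then show ?thesis using True unfolding A_def B_def C_def by simp
  next
    case False
    with B0 have Bp: "B > 0" by simp
    have "0 \<le> A - 2*(C/B)*C + (C/B)\<^sup>2*B" by (rule key)
    then have "0 \<le> A - C\<^sup>2/B" using Bp by (simp add: power2_eq_square field_simps)
    then have "C\<^sup>2 \<le> A*B" using Bp by (simp add: field_simps)
    then show ?thesis unfolding A_def B_def C_def by simp
  qed
qed


lemma layer:
  fixes G :: "'a::finite \<Rightarrow> 'a \<Rightarrow> real"
  assumes H: "\<And>S. S \<subseteq> T \<Longrightarrow> S \<noteq> {} \<Longrightarrow>
     (\<Sum>i\<in>UNIV. \<Sum>j\<in>UNIV. G i j * (if i \<in> S \<and> j \<in> S then 1 else 0)) \<le> \<eta> * real (card S)"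
  shows "\<forall>y. (\<forall>i. 0 \<le> y i) \<and> {i. y i \<noteq> 0} \<subseteq> T \<and> card {i. y i \<noteq> 0} = k \<longrightarrow>
     (\<Sum>i\<in>UNIV. \<Sum>j\<in>UNIV. G i j * min (y i) (y j)) \<le> \<eta> * (\<Sum>i\<in>UNIV. y i)"
proof (induction k rule: less_induct)
  case (less k)
  show ?case
  proof (intro allI impI, elim conjE)
    fix y :: "'a \<Rightarrow> real"
    assume y0: "\<forall>i. 0 \<le> y i" and yT: "{i. y i \<noteq> 0} \<subseteq> T" and yk: "card {i. y i \<noteq> 0} = k"
    define S where "S = {i. y i \<noteq> 0}"
    show "(\<Sum>i\<in>UNIV. \<Sum>j\<in>UNIV. G i j * min (y i) (y j)) \<le> \<eta> * (\<Sum>i\<in>UNIV. y i)"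
    proof (cases "S = {}")
      case True
      then have "\<And>i. y i = 0" unfolding S_def by auto
      then show ?thesis by simp
    next
      case False
      have fS: "finite S" by simp
      define c where "c = Min (y ` S)"
      obtain i0 where i0: "i0 \<in> S" "y i0 = c"
      proof -
        have "c \<in> y ` S" unfolding c_def using False fS by (intro Min_in) auto
        then show ?thesis using that by auto
      qed
      have cle: "\<And>i. i \<in> S \<Longrightarrow> c \<le> y i" unfolding c_def using fS by simp
      have cpos: "0 < c" using i0 y0 unfolding S_def by (metis less_eq_real_def mem_Collect_eq)
      define y' where "y' = (\<lambda>i. if i \<in> S then y i - c else 0)"
      have y'0: "\<forall>i. 0 \<le> y' i" using cle unfolding y'_def by auto
      have sub: "{i. y' i \<noteq> 0} \<subseteq> S - {i0}" using i0 unfolding y'_def by auto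
      have y'T: "{i. y' i \<noteq> 0} \<subseteq> T" using sub yT unfolding S_def by auto
      have "card {i. y' i \<noteq> 0} \<le> card (S - {i0})" using sub by (intro card_mono) auto
      also have "\<dots> < card S" using i0 fS by (metis card_Diff1_less)
      finally have lt: "card {i. y' i \<noteq> 0} < k" using yk S_def by simp
      have IH: "(\<Sum>i\<in>UNIV. \<Sum>j\<in>UNIV. G i j * min (y' i) (y' j)) \<le> \<eta> * (\<Sum>i\<in>UNIV. y' i)"
        using less.IH[OF lt] y'0 y'T by blast
      have pt: "G i j * min (y i) (y j) = c * (G i j * (if i \<in> S \<and> j \<in> S then 1 else 0)) + G i j * min (y' i) (y' j)" for i j
      proof -
        have "min (y i) (y j) = c * (if i \<in> S \<and> j \<in> S then 1 else 0) + min (y' i) (y' j)"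
        proof (cases "i \<in> S \<and> j \<in> S")
          case True
          then show ?thesis using cle[of i] cle[of j] unfolding y'_def by (auto simp: min_def)
        next
          case False
          then have "y i = 0 \<or> y j = 0" unfolding S_def by auto
          moreover have "y' i = 0 \<or> y' j = 0" using False unfolding y'_def by auto
          ultimately have "min (y i) (y j) = 0" "min (y' i) (y' j) = 0"
            using y0[rule_format, of i] y0[rule_format, of j] y'0[rule_format, of i] y'0[rule_format, of j] by (auto simp: min_def)
          then show ?thesis using False by auto
        qed
        then show ?thesis by (simp add: algebra_simps)
      qed
      have "(\<Sum>i\<in>UNIV. \<Sum>j\<in>UNIV. G i j * min (y i) (y j)) =
         c * (\<Sum>i\<in>UNIV. \<Sum>j\<in>UNIV. G i j * (if i \<in> S \<and> j \<in> S then 1 else 0)) + (\<Sum>i\<in>UNIV. \<Sum>j\<in>UNIV. G i j * min (y' i) (y' j))"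
        by (simp add: pt sum.distrib sum_distrib_left)
      also have "\<dots> \<le> c * (\<eta> * real (card S)) + \<eta> * (\<Sum>i\<in>UNIV. y' i)"
        using H[of S] yT False cpos IH unfolding S_def
        by (intro add_mono mult_left_mono) auto
      also have "\<dots> = \<eta> * (\<Sum>i\<in>UNIV. y i)"
      proof -
        have yy: "y i = c * (if i \<in> S then 1 else 0) + y' i" for i
          unfolding y'_def S_def by auto
        have "(\<Sum>i\<in>UNIV. y i) = c * (\<Sum>i\<in>UNIV. (if i \<in> S then 1 else 0)) + (\<Sum>i\<in>UNIV. y' i)"
          by (subst yy) (simp add: sum.distrib sum_distrib_left)
        moreover have "(\<Sum>i\<in>UNIV. (if i \<in> S then 1 else 0::real)) = real (card S)"
          by (simp add: sum.If_cases)
        ultimately show ?thesis by (simp add: algebra_simps)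
      qed
      finally show ?thesis .
    qed
  qed
qed


lemma ifsum:
  fixes G :: "'a::finite \<Rightarrow> 'a \<Rightarrow> real"
  shows "(\<Sum>i\<in>UNIV. \<Sum>j\<in>UNIV. G i j * (if i \<in> S \<and> j \<in> S then 1 else 0)) = (\<Sum>i\<in>S. \<Sum>j\<in>S. G i j)"
proof -
  have "(\<Sum>i\<in>UNIV. \<Sum>j\<in>UNIV. G i j * (if i \<in> S \<and> j \<in> S then 1 else 0))
      = (\<Sum>i\<in>UNIV. if i \<in> S then (\<Sum>j\<in>UNIV. if j \<in> S then G i j else 0) else 0)"
    by (intro sum.cong) (auto intro: sum.cong)
  also have "\<dots> = (\<Sum>i\<in>S. \<Sum>j\<in>S. G i j)"
    by (simp add: sum.If_cases)
  finally show ?thesis .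
qed

lemma inside_outside:
  fixes G :: "'a::finite \<Rightarrow> 'a \<Rightarrow> real"
  assumes "graph_matrix G"
  shows "(\<Sum>i\<in>S. \<Sum>j\<in>S. G i j) = real (card S) - (\<Sum>i\<in>S. \<Sum>j\<in>UNIV - S. G i j)"
proof -
  have "\<And>i. (\<Sum>j\<in>UNIV. G i j) = (\<Sum>j\<in>UNIV - S. G i j) + (\<Sum>j\<in>S. G i j)"
    by (rule sum.subset_diff) auto
  then have "\<And>i. (\<Sum>j\<in>S. G i j) = 1 - (\<Sum>j\<in>UNIV - S. G i j)"
    using assms unfolding graph_matrix_def by (metis add_diff_cancel_left')
  then show ?thesis by (simp add: sum_subtractf)
qed

lemma quad_le:
  fixes G :: "'a::finite \<Rightarrow> 'a \<Rightarrow> real"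
  assumes gm: "graph_matrix G"
  shows "quad_form G x \<le> (\<Sum>i\<in>UNIV. (x i)\<^sup>2)"
proof -
  have "quad_form G x \<le> (\<Sum>i\<in>UNIV. \<Sum>j\<in>UNIV. G i j * (x i)\<^sup>2 / 2 + G i j * (x j)\<^sup>2 / 2)"
    unfolding quad_form_def
  proof (intro sum_mono)
    fix i j
    have "0 \<le> G i j" using gm unfolding graph_matrix_def by auto
    moreover have "x i * x j \<le> (x i)\<^sup>2/2 + (x j)\<^sup>2/2"
      using sum_squares_bound[of "x i" "x j"] by (simp add: power2_eq_square field_simps)
    ultimately have "G i j * (x i * x j) \<le> G i j * ((x i)\<^sup>2/2 + (x j)\<^sup>2/2)"
      by (simp add: mult_left_mono)
    then show "x i * G i j * x j \<le> G i j * (x i)\<^sup>2 / 2 + G i j * (x j)\<^sup>2 / 2"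
      by (simp add: algebra_simps)
  qed
  also have "\<dots> = (\<Sum>i\<in>UNIV. \<Sum>j\<in>UNIV. G i j * ((x i)\<^sup>2 / 2)) + (\<Sum>i\<in>UNIV. \<Sum>j\<in>UNIV. G i j * ((x j)\<^sup>2 / 2))"
    by (simp add: sum.distrib)
  also have "\<dots> = (\<Sum>i\<in>UNIV. (x i)\<^sup>2)"
    using rowsum[OF gm, of "\<lambda>i. (x i)\<^sup>2/2"] colsum[OF gm, of "\<lambda>i. (x i)\<^sup>2/2"]
    by (simp add: sum_divide_distrib[symmetric])
  finally show ?thesis .
qed


lemma part2_vec:
  fixes G :: "'a::finite \<Rightarrow> 'a \<Rightarrow> real" and x :: "'a \<Rightarrow> real"
  assumes gm: "graph_matrix G" and eta: "0 < \<eta>" "\<eta> < 1"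
    and H: "\<And>S. S \<subseteq> {i. x i \<noteq> 0} \<Longrightarrow> S \<noteq> {} \<Longrightarrow> expansion G S \<ge> 1 - \<eta>"
    and nx: "l2norm x = 1"
  shows "quad_form G x \<le> sqrt (1 - (1 - \<eta>)\<^sup>2)"
proof -
  have G0: "\<And>i j. 0 \<le> G i j" using gm unfolding graph_matrix_def by auto
  define T where "T = {i. x i \<noteq> 0}"
  have H2: "(\<Sum>i\<in>UNIV. \<Sum>j\<in>UNIV. G i j * (if i \<in> S \<and> j \<in> S then 1 else 0)) \<le> \<eta> * real (card S)"
    if "S \<subseteq> T" "S \<noteq> {}" for S
  proof -
    have cp: "0 < real (card S)" using that by (simp add: card_gt_0_iff)
    have "1 - \<eta> \<le> (1 / real (card S)) * (\<Sum>i\<in>S. \<Sum>j\<in>UNIV - S. G i j)"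
      using H[of S] that unfolding T_def expansion_def by auto
    then have "1 - \<eta> \<le> (\<Sum>i\<in>S. \<Sum>j\<in>UNIV - S. G i j) / real (card S)" by simp
    then have "(1 - \<eta>) * real (card S) \<le> (\<Sum>i\<in>S. \<Sum>j\<in>UNIV - S. G i j)"
      using cp by (simp add: pos_le_divide_eq)
    then show ?thesis unfolding ifsum inside_outside[OF gm] by (simp add: algebra_simps)
  qed
  define z where "z = (\<lambda>i. \<bar>x i\<bar>)"
  define y where "y = (\<lambda>i. (z i)\<^sup>2)"
  have sx: "(\<Sum>i\<in>UNIV. (x i)\<^sup>2) = 1" using nx unfolding l2norm_def
    by (metis real_sqrt_eq_1_iff)
  have sy: "(\<Sum>i\<in>UNIV. y i) = 1" using sx unfolding y_def z_def by simp
  have ysupp: "{i. y i \<noteq> 0} \<subseteq> T" unfolding y_def z_def T_def by auto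
  define m where "m = (\<Sum>i\<in>UNIV. \<Sum>j\<in>UNIV. G i j * min (y i) (y j))"
  have m_le: "m \<le> \<eta>"
    using layer[of T G \<eta>, OF H2, rule_format, of y] ysupp sy unfolding m_def y_def by auto
  define a where "a = (\<lambda>i j. min (z i) (z j))"
  define b where "b = (\<lambda>i j. \<bar>z i - z j\<bar>)"
  have z0: "\<And>i. 0 \<le> z i" unfolding z_def by auto
  have ma: "m = (\<Sum>i\<in>UNIV. \<Sum>j\<in>UNIV. G i j * (a i j)\<^sup>2)"
  proof -
    have "min (y i) (y j) = (a i j)\<^sup>2" for i j
      using z0[of i] z0[of j] unfolding y_def a_def min_def
      by (auto intro: power_mono simp: power_mono)
    then show ?thesis unfolding m_def by simp
  qed
  have m0: "0 \<le> m" unfolding ma by (intro sum_nonneg mult_nonneg_nonneg G0) auto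
  define P where "P = (\<Sum>i\<in>UNIV. \<Sum>j\<in>UNIV. G i j * (z i * z j))"
  define C where "C = (\<Sum>i\<in>UNIV. \<Sum>j\<in>UNIV. G i j * a i j * b i j)"
  have PmC: "P = m + C"
  proof -
    have "G i j * (z i * z j) = G i j * (a i j)\<^sup>2 + G i j * a i j * b i j" for i j
    proof -
      have "z i * z j = (a i j)\<^sup>2 + a i j * b i j"
        unfolding a_def b_def by (cases "z i \<le> z j") (auto simp: min_def power2_eq_square algebra_simps)
      then show ?thesis by (simp add: algebra_simps)
    qed
    then show ?thesis unfolding P_def ma C_def by (simp add: sum.distrib)
  qed
  have C0: "0 \<le> C" unfolding C_def a_def b_def
    using z0 by (intro sum_nonneg mult_nonneg_nonneg G0) auto
  have Bv: "(\<Sum>i\<in>UNIV. \<Sum>j\<in>UNIV. G i j * (b i j)\<^sup>2) = 2 - 2 * P"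
  proof -
    have "G i j * (b i j)\<^sup>2 = G i j * (z i)\<^sup>2 + G i j * (z j)\<^sup>2 - 2 * (G i j * (z i * z j))" for i j
      unfolding b_def by (simp add: power2_eq_square algebra_simps)
    then have "(\<Sum>i\<in>UNIV. \<Sum>j\<in>UNIV. G i j * (b i j)\<^sup>2)
       = (\<Sum>i\<in>UNIV. \<Sum>j\<in>UNIV. G i j * (z i)\<^sup>2) + (\<Sum>i\<in>UNIV. \<Sum>j\<in>UNIV. G i j * (z j)\<^sup>2) - 2 * P"
      unfolding P_def by (simp add: sum.distrib sum_subtractf sum_distrib_left)
    also have "\<dots> = 2 - 2 * P"
      using rowsum[OF gm, of "\<lambda>i. (z i)\<^sup>2"] colsum[OF gm, of "\<lambda>i. (z i)\<^sup>2"] sy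
      unfolding y_def by simp
    finally show ?thesis .
  qed
  have CS: "C\<^sup>2 \<le> m * (2 - 2 * P)"
    using cs2[of G a b, OF G0] unfolding C_def ma Bv by simp
  have P2: "P\<^sup>2 \<le> 2 * \<eta> - \<eta>\<^sup>2"
  proof -
    have "P\<^sup>2 = m\<^sup>2 + 2*m*C + C\<^sup>2" unfolding PmC by (simp add: power2_eq_square algebra_simps)
    also have "\<dots> \<le> m\<^sup>2 + 2*m*C + m * (2 - 2 * (m + C))" using CS PmC by simp
    also have "\<dots> = 2*m - m\<^sup>2" by (simp add: power2_eq_square algebra_simps)
    also have "\<dots> \<le> 2 * \<eta> - \<eta>\<^sup>2"
    proof -
      have "0 \<le> (\<eta> - m) * (2 - \<eta> - m)" using m_le eta m0 by (intro mult_nonneg_nonneg) auto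
      then show ?thesis by (simp add: power2_eq_square algebra_simps)
    qed
    finally show ?thesis .
  qed
  have QP: "quad_form G x \<le> P"
    unfolding quad_form_def P_def
  proof (intro sum_mono)
    fix i j
    have "x i * G i j * x j \<le> \<bar>x i * G i j * x j\<bar>" by simp
    also have "\<dots> = G i j * (z i * z j)" using G0[of i j] unfolding z_def by (simp add: abs_mult)
    finally show "x i * G i j * x j \<le> G i j * (z i * z j)" .
  qed
  have "P \<le> sqrt (1 - (1 - \<eta>)\<^sup>2)"
    using P2 by (intro real_le_rsqrt) (simp add: power2_eq_square algebra_simps)
  with QP show ?thesis by simp
qed


theorem theorem4:
  fixes G :: "'a::finite \<Rightarrow> 'a \<Rightarrow> real" and \<eta> \<delta> :: real
  assumes "0 < \<eta>" "\<eta> < 1" "0 < \<delta>" "\<delta> < 1"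
    and "graph_matrix G" and "psd G"
    and "1 \<le> \<delta> * real CARD('a)"
  shows "((\<exists>S. real (card S) = \<delta> * real CARD('a) \<and> expansion G S \<le> \<eta>)
           \<longrightarrow> sparse_val G \<delta> \<ge> 1 - \<eta>)
         \<and> ((\<forall>S. S \<noteq> {} \<and> real (card S) \<le> 2 * \<delta> * real CARD('a) \<longrightarrow> expansion G S \<ge> 1 - \<eta>)
           \<longrightarrow> sparse_val G \<delta> \<le> sqrt (1 - (1 - \<eta>)\<^sup>2))"
proof -
  note gm = assms(5)
  define X where "X = {quad_form G x | x. l2norm x = 1 \<and> real (l0norm x) \<le> \<delta> * real CARD('a)}"
  have sv: "sparse_val G \<delta> = Sup X" unfolding X_def sparse_val_def ..
  have bdd: "bdd_above X"
  proof (rule bdd_aboveI[of _ 1])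
    fix q assume "q \<in> X"
    then obtain x where "q = quad_form G x" "l2norm x = 1" unfolding X_def by auto
    then show "q \<le> 1" using quad_le[OF gm, of x] unfolding l2norm_def
      by (metis real_sqrt_eq_1_iff)
  qed
  have ne: "X \<noteq> {}"
  proof -
    obtain i0 :: 'a where True by simp
    define e where "e = (\<lambda>i. if i = i0 then 1 else (0::real))"
    have "\<And>i. (e i)\<^sup>2 = e i" unfolding e_def by simp
    then have "l2norm e = 1" unfolding l2norm_def by (simp add: e_def)
    moreover have "l0norm e = 1" unfolding l0norm_def e_def by simp
    ultimately have "quad_form G e \<in> X" unfolding X_def using assms(7) by auto
    then show ?thesis by auto
  qed
  show ?thesis
  proof (intro conjI impI)
    assume "\<exists>S. real (card S) = \<delta> * real CARD('a) \<and> expansion G S \<le> \<eta>"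
    then obtain S :: "'a set" where S: "real (card S) = \<delta> * real CARD('a)" "expansion G S \<le> \<eta>" by blast
    have cp: "0 < real (card S)" using S(1) assms(7) by linarith
    define c where "c = real (card S)"
    define v where "v = (\<lambda>i. if i \<in> S then 1 / sqrt c else 0)"
    have "(\<Sum>i\<in>UNIV. (v i)\<^sup>2) = c * (1 / sqrt c)\<^sup>2"
    proof -
      have "\<And>i. (v i)\<^sup>2 = (if i \<in> S then (1 / sqrt c)\<^sup>2 else 0)" unfolding v_def by simp
      then show ?thesis unfolding c_def by (simp add: sum.If_cases)
    qed
    also have "\<dots> = 1" using cp unfolding c_def by (auto simp add: power_divide)
    finally have "l2norm v = 1" unfolding l2norm_def by simp
    moreover have "l0norm v = card S"
    proof -
      have "{i. v i \<noteq> 0} = S" using cp unfolding v_def c_def by auto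
      then show ?thesis unfolding l0norm_def by simp
    qed
    ultimately have vX: "quad_form G v \<in> X" unfolding X_def using S(1) by auto
    have "quad_form G v = (\<Sum>i\<in>UNIV. \<Sum>j\<in>UNIV. G i j * (if i \<in> S \<and> j \<in> S then 1 else 0)) / c"
    proof -
      have "v i * G i j * v j = G i j * (if i \<in> S \<and> j \<in> S then 1 else 0) / c" for i j
        using cp unfolding v_def c_def by (auto simp: power2_eq_square[symmetric])
      then show ?thesis unfolding quad_form_def by (simp add: sum_divide_distrib)
    qed
    also have "\<dots> = (c - (\<Sum>i\<in>S. \<Sum>j\<in>UNIV - S. G i j)) / c"
      unfolding ifsum inside_outside[OF gm] c_def ..
    also have "\<dots> = 1 - expansion G S"
      using cp unfolding expansion_def c_def by (auto simp add: diff_divide_distrib)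
    also have "\<dots> \<ge> 1 - \<eta>" using S(2) by simp
    finally have "1 - \<eta> \<le> quad_form G v" .
    also have "quad_form G v \<le> Sup X" by (rule cSup_upper[OF vX bdd])
    finally show "1 - \<eta> \<le> sparse_val G \<delta>" unfolding sv .
  next
    assume H: "\<forall>S. S \<noteq> {} \<and> real (card S) \<le> 2 * \<delta> * real CARD('a) \<longrightarrow> 1 - \<eta> \<le> expansion G S"
    have "Sup X \<le> sqrt (1 - (1 - \<eta>)\<^sup>2)"
    proof (rule cSup_least[OF ne])
      fix q assume "q \<in> X"
      then obtain x where x: "q = quad_form G x" "l2norm x = 1" "real (l0norm x) \<le> \<delta> * real CARD('a)"
        unfolding X_def by auto
      have "quad_form G x \<le> sqrt (1 - (1 - \<eta>)\<^sup>2)"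
      proof (rule part2_vec[OF gm assms(1,2) _ x(2)])
        fix S assume S: "S \<subseteq> {i. x i \<noteq> 0}" "S \<noteq> {}"
        have "card S \<le> l0norm x" unfolding l0norm_def using S(1) by (intro card_mono) auto
        then have "real (card S) \<le> 2 * \<delta> * real CARD('a)" using x(3) assms(3) by linarith
        then show "1 - \<eta> \<le> expansion G S" using H S(2) by blast
      qed
      then show "q \<le> sqrt (1 - (1 - \<eta>)\<^sup>2)" using x(1) by simp
    qed
    then show "sparse_val G \<delta> \<le> sqrt (1 - (1 - \<eta>)\<^sup>2)" unfolding sv .
  qed
qed

end
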